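(* For positive integers $\ell,m$, let $A(\ell,m)$ be the $(\ell+m)\times(\ell+m)$ coloring matrix with entries $a_{ij}=0$ if $i,j>\ell$ and $a_{ij}=1$ otherwise. Then for $1\le i\le\ell$, $$\ell^2F_{A(\ell,m)}^{(i)}(x)^3-2\ell F_{A(\ell,m)}^{(i)}(x)^2+((\ell-m)x+1)F_{A(\ell,m)}^{(i)}(x)-x=0,$$ and for $\ell+1\le i\le\ell+m$, $$mF_{A(\ell,m)}^{(i)}(x)^3+(\ell-m)xF_{A(\ell,m)}^{(i)}(x)^2-xF_{A(\ell,m)}^{(i)}(x)+x^2=0.$$
   Context: A plane tree is an unlabeled rooted tree in which the children of every vertex are linearly ordered. A coloring matrix is a square matrix $A=(a_{ij})$ with entries in $\{0,1\}$. An $A$-coloring of a plane tree assigns to each vertex a color (an index of a row of $A$) such that whenever a vertex of color $j$ is a child of a vertex of color $i$, $a_{ij}=1$. Let $t_A^{(i)}(n)$ be the number of pairs (plane tree with $n$ vertices, $A$-coloring of it) with root color $i$, and $F_A^{(i)}(x)=\sum_{n\ge1}t_A^{(i)}(n)x^n$ (formal power series). *)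

theory Defs
  imports Main "HOL-Computational_Algebra.Formal_Power_Series"
begin

datatype 'a ltree = LNode 'a "'a ltree list"

type_synonym plane_tree = "unit ltree"

fun num_vertices :: "'a ltree \<Rightarrow> nat" where
  "num_vertices (LNode a ts) = Suc (sum_list (map num_vertices ts))"

fun root_label :: "'a ltree \<Rightarrow> 'a" where
  "root_label (LNode a ts) = a"

definition shape :: "'a ltree \<Rightarrow> plane_tree" where
  "shape c = map_ltree (\<lambda>_. ()) c"

text \<open>A coloring matrix of size N is given by its entries a i j (i,j in {1..N}),
encoded as booleans (True = 1). A coloring of a plane tree t is a labelled
tree c with shape c = t; it is an A-coloring if all colors lie in {1..N} and
whenever a vertex of color j is a child of a vertex of color i, a i j = 1.\<close>
fun is_A_coloring :: "nat \<Rightarrow> (nat \<Rightarrow> nat \<Rightarrow> bool) \<Rightarrow> nat ltree \<Rightarrow> bool" where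
  "is_A_coloring N a (LNode i ts) =
     (i \<in> {1..N} \<and> (\<forall>s\<in>set ts. a i (root_label s) \<and> is_A_coloring N a s))"

definition t_A :: "nat \<Rightarrow> (nat \<Rightarrow> nat \<Rightarrow> bool) \<Rightarrow> nat \<Rightarrow> nat \<Rightarrow> nat" where
  "t_A N a i n = card {(t, c). num_vertices t = n \<and> shape c = t \<and>
                        is_A_coloring N a c \<and> root_label c = i}"

definition F_A :: "nat \<Rightarrow> (nat \<Rightarrow> nat \<Rightarrow> bool) \<Rightarrow> nat \<Rightarrow> int fps" where
  "F_A N a i = Abs_fps (\<lambda>n. if n \<ge> 1 then int (t_A N a i n) else 0)"

definition A_lm :: "nat \<Rightarrow> nat \<Rightarrow> nat \<Rightarrow> nat \<Rightarrow> bool" where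
  "A_lm l m i j = (\<not> (i > l \<and> j > l))"

end

theory Submission
  imports Defs
begin

definition col :: "nat \<Rightarrow> (nat \<Rightarrow> nat \<Rightarrow> bool) \<Rightarrow> nat \<Rightarrow> nat \<Rightarrow> nat ltree set" where
  "col N a j n = {c. num_vertices c = n \<and> is_A_coloring N a c \<and> root_label c = j}"

definition fo :: "nat \<Rightarrow> (nat \<Rightarrow> nat \<Rightarrow> bool) \<Rightarrow> nat \<Rightarrow> nat \<Rightarrow> nat ltree list set" where
  "fo N a i n = {cs. sum_list (map num_vertices cs) = n \<and>
       (\<forall>s\<in>set cs. a i (root_label s) \<and> is_A_coloring N a s)}"

definition J :: "nat \<Rightarrow> (nat \<Rightarrow> nat \<Rightarrow> bool) \<Rightarrow> nat \<Rightarrow> nat set" where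
  "J N a i = {j\<in>{1..N}. a i j}"

lemma nv_map: "num_vertices (map_ltree f t) = num_vertices t"
proof (induction t)
  case (LNode x ts)
  have "map (num_vertices \<circ> map_ltree f) ts = map num_vertices ts"
    using LNode.IH by (auto simp: map_eq_conv)
  then show ?case by (simp del: map_map add: map_map[symmetric])
qed

lemma nv_pos: "num_vertices c \<ge> 1"
  by (cases c) auto

lemma nv_ne0[simp]: "num_vertices c \<noteq> 0"
  by (cases c) auto

lemma col_root: "is_A_coloring N a c \<Longrightarrow> root_label c \<in> {1..N}"
  by (cases c) auto

lemma t_A_col: "t_A N a i n = card (col N a i n)"
proof -
  have "{(t, c). num_vertices t = n \<and> shape c = t \<and> is_A_coloring N a c \<and> root_label c = i}
        = (\<lambda>c. (shape c, c)) ` col N a i n"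
    by (auto simp: col_def shape_def nv_map)
  moreover have "inj_on (\<lambda>c. (shape c, c)) (col N a i n)" by (rule inj_onI) auto
  ultimately show ?thesis unfolding t_A_def by (simp add: card_image)
qed

lemma col_0: "col N a i 0 = {}"
  by (auto simp: col_def)

lemma col_Suc: "col N a i (Suc n) = (if i \<in> {1..N} then LNode i ` fo N a i n else {})"
proof (cases "i \<in> {1..N}")
  case True
  have "col N a i (Suc n) \<subseteq> LNode i ` fo N a i n"
  proof
    fix c assume "c \<in> col N a i (Suc n)"
    then show "c \<in> LNode i ` fo N a i n"
      by (cases c) (auto simp: col_def fo_def)
  qed
  moreover have "LNode i ` fo N a i n \<subseteq> col N a i (Suc n)"
    using True by (auto simp: col_def fo_def)
  ultimately show ?thesis using True by auto
next
  case False
  then show ?thesis using col_root by (auto simp: col_def)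
qed

lemma fo_0: "fo N a i 0 = {[]}"
proof -
  have "cs = []" if "sum_list (map num_vertices cs) = 0" for cs :: "nat ltree list"
    using that by (cases cs) auto
  then show ?thesis by (auto simp: fo_def)
qed

lemma fo_pos:
  assumes "n \<ge> 1"
  shows "fo N a i n = (\<Union>p\<in>{1..n} \<times> J N a i.
            (\<lambda>(s,cs). s#cs) ` (col N a (snd p) (fst p) \<times> fo N a i (n - fst p)))"
    (is "?L = ?R")
proof
  show "?L \<subseteq> ?R"
  proof
    fix cs assume cs: "cs \<in> ?L"
    then obtain s ss where css: "cs = s # ss"
      using assms by (cases cs) (auto simp: fo_def)
    let ?k = "num_vertices s" and ?j = "root_label s"
    have k1: "?k \<ge> 1" by (rule nv_pos)
    have kn: "?k \<le> n" using cs css by (auto simp: fo_def)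
    have j: "?j \<in> J N a i" using cs css col_root by (auto simp: fo_def J_def)
    have "s \<in> col N a ?j ?k" using cs css by (auto simp: fo_def col_def)
    moreover have "ss \<in> fo N a i (n - ?k)" using cs css by (auto simp: fo_def)
    ultimately show "cs \<in> ?R" using k1 kn j css
      by (intro UN_I[of "(?k, ?j)"]) auto
  qed
next
  show "?R \<subseteq> ?L"
    by (auto simp: fo_def col_def J_def)
qed

lemma fin_fo: "finite (fo N a i n)"
proof (induction n arbitrary: i rule: less_induct)
  case (less n)
  show ?case
  proof (cases "n = 0")
    case True then show ?thesis by (simp add: fo_0)
  next
    case False
    have finJ: "finite (J N a i)" by (simp add: J_def)
    have "finite (col N a j k)" if kk: "k \<in> {1..n}" for j k
    proof -
      obtain k' where k': "k = Suc k'" using kk by (cases k) auto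
      then have "k' < n" using kk by auto
      then show ?thesis using less k' by (simp add: col_Suc)
    qed
    moreover have "finite (fo N a i (n - k))" if "k \<in> {1..n}" for k
      using less that by auto
    ultimately show ?thesis using False finJ
      by (subst fo_pos) (auto intro!: finite_cartesian_product)
  qed
qed

lemma fin_col: "finite (col N a j k)"
  by (cases k) (auto simp: col_0 col_Suc fin_fo)

lemma card_fo:
  assumes "n \<ge> 1"
  shows "card (fo N a i n) = (\<Sum>p\<in>{1..n} \<times> J N a i. card (col N a (snd p) (fst p)) * card (fo N a i (n - fst p)))"
proof -
  have "card (fo N a i n) = (\<Sum>p\<in>{1..n} \<times> J N a i.
      card ((\<lambda>(s,cs). s#cs) ` (col N a (snd p) (fst p) \<times> fo N a i (n - fst p))))"
    unfolding fo_pos[OF assms]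
  proof (rule card_UN_disjoint)
    show "finite ({1..n} \<times> J N a i)" by (simp add: J_def)
    show "\<forall>p\<in>{1..n} \<times> J N a i. finite ((\<lambda>(s,cs). s#cs) ` (col N a (snd p) (fst p) \<times> fo N a i (n - fst p)))"
      by (auto simp: fin_col fin_fo)
    show "\<forall>p\<in>{1..n} \<times> J N a i. \<forall>q\<in>{1..n} \<times> J N a i. p \<noteq> q \<longrightarrow>
      (\<lambda>(s,cs). s#cs) ` (col N a (snd p) (fst p) \<times> fo N a i (n - fst p)) \<inter>
      (\<lambda>(s,cs). s#cs) ` (col N a (snd q) (fst q) \<times> fo N a i (n - fst q)) = {}"
      by (auto simp: col_def)
  qed
  also have "\<dots> = (\<Sum>p\<in>{1..n} \<times> J N a i. card (col N a (snd p) (fst p)) * card (fo N a i (n - fst p)))"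
  proof (rule sum.cong[OF refl])
    fix p
    have "inj_on (\<lambda>(s,cs). s#cs) (col N a (snd p) (fst p) \<times> fo N a i (n - fst p))"
      by (rule inj_onI) auto
    then show "card ((\<lambda>(s,cs). s#cs) ` (col N a (snd p) (fst p) \<times> fo N a i (n - fst p))) =
        card (col N a (snd p) (fst p)) * card (fo N a i (n - fst p))"
      by (simp add: card_image card_cartesian_product)
  qed
  finally show ?thesis .
qed


lemma F_A_nth: "fps_nth (F_A N a j) n = int (card (col N a j n))"
  by (cases n) (auto simp: F_A_def t_A_col col_0)

definition phi :: "nat \<Rightarrow> (nat \<Rightarrow> nat \<Rightarrow> bool) \<Rightarrow> nat \<Rightarrow> int fps" where
  "phi N a i = Abs_fps (\<lambda>n. int (card (fo N a i n)))"

lemma F_phi: "i \<in> {1..N} \<Longrightarrow> F_A N a i = fps_X * phi N a i"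
proof -
  have inj: "inj (LNode i :: nat ltree list \<Rightarrow> _)" by (rule injI) simp
  assume "i \<in> {1..N}"
  then show ?thesis
    by (intro fps_ext) (auto simp: F_A_nth fps_X_mult_nth phi_def col_0 col_Suc
       card_image[OF inj_on_subset[OF inj]] gr0_conv_Suc)
qed

lemma phi_eq: "phi N a i = 1 + (\<Sum>j\<in>J N a i. F_A N a j) * phi N a i"
proof (rule fps_ext)
  fix n
  show "fps_nth (phi N a i) n = fps_nth (1 + (\<Sum>j\<in>J N a i. F_A N a j) * phi N a i) n"
  proof (cases "n = 0")
    case True
    then show ?thesis by (simp add: phi_def fo_0 fps_mult_nth fps_sum_nth F_A_nth col_0)
  next
    case False
    then have n1: "n \<ge> 1" by simp
    have "fps_nth (1 + (\<Sum>j\<in>J N a i. F_A N a j) * phi N a i) n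
        = (\<Sum>k=0..n. (\<Sum>j\<in>J N a i. int (card (col N a j k))) * int (card (fo N a i (n - k))))"
      using False by (simp add: fps_mult_nth fps_sum_nth F_A_nth phi_def)
    also have "\<dots> = (\<Sum>k=1..n. (\<Sum>j\<in>J N a i. int (card (col N a j k))) * int (card (fo N a i (n - k))))"
      by (simp add: sum.atLeast_Suc_atMost col_0)
    also have "\<dots> = (\<Sum>k=1..n. \<Sum>j\<in>J N a i. int (card (col N a j k)) * int (card (fo N a i (n - k))))"
      by (simp add: sum_distrib_right)
    also have "\<dots> = (\<Sum>p\<in>{1..n} \<times> J N a i. int (card (col N a (snd p) (fst p))) * int (card (fo N a i (n - fst p))))"
      by (simp add: sum.cartesian_product case_prod_beta)
    also have "\<dots> = int (card (fo N a i n))"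
      by (simp add: card_fo[OF n1])
    finally show ?thesis by (simp add: phi_def)
  qed
qed

lemma F_eq: "i \<in> {1..N} \<Longrightarrow> F_A N a i = fps_X + (\<Sum>j\<in>J N a i. F_A N a j) * F_A N a i"
proof -
  assume i: "i \<in> {1..N}"
  have "F_A N a i = fps_X * (1 + (\<Sum>j\<in>J N a i. F_A N a j) * phi N a i)"
    by (subst F_phi[OF i]) (subst phi_eq, rule refl)
  also have "\<dots> = fps_X + (\<Sum>j\<in>J N a i. F_A N a j) * (fps_X * phi N a i)"
    by (simp add: algebra_simps)
  finally show ?thesis using F_phi[OF i] by simp
qed

lemma unique_sol:
  fixes Q F G :: "int fps"
  assumes "fps_nth Q 0 = 0" "F = fps_X + Q * F" "G = fps_X + Q * G"
  shows "F = G"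
proof -
  have "(1 - Q) * (F - G) = 0"
  proof -
    have "(1 - Q) * (F - G) = (F - Q * F) - (G - Q * G)" by (simp add: algebra_simps)
    also have "\<dots> = 0" using assms(2,3) by (metis add_diff_cancel_right' diff_self)
    finally show ?thesis .
  qed
  moreover have "1 - Q \<noteq> 0"
  proof
    assume "1 - Q = 0"
    then have "fps_nth (1 - Q) 0 = 0" by simp
    then show False using assms(1) by simp
  qed
  ultimately show ?thesis by simp
qed

lemma alg:
  fixes L M f g X :: "'a::idom"
  assumes X: "X \<noteq> 0" and e1: "f = X + (L*f + M*g)*f" and e2: "g = X + L*f*g"
  shows "L^2*f^3 - 2*L*f^2 + ((L-M)*X+1)*f - X = 0"
    and "M*g^3 + (L-M)*X*g^2 - X*g + X^2 = 0"
proof -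
  show t1: "L^2*f^3 - 2*L*f^2 + ((L-M)*X+1)*f - X = 0"
  proof -
    have "L^2*f^3 - 2*L*f^2 + ((L-M)*X+1)*f - X = (1 - L*f)*(f - X - (L*f + M*g)*f) + M*f*(g - X - L*f*g)"
      by (simp add: algebra_simps power2_eq_square power3_eq_cube)
    also have "\<dots> = 0"
    proof -
      have z1: "f - X - (L*f + M*g)*f = 0" by (subst (1) e1) simp
      have z2: "g - X - L*f*g = 0" by (subst (1) e2) simp
      show ?thesis by (simp only: z1 z2) simp
    qed
    finally show ?thesis .
  qed
  have U: "L*f*g = g - X" using e2 by (simp add: algebra_simps)
  have "g^3 * (L*(L^2*f^3 - 2*L*f^2 + ((L-M)*X+1)*f - X)) =
        (L*f*g)^3 - 2*g*(L*f*g)^2 + g^2*(L*f*g) + (L-M)*X*g^2*(L*f*g) - L*X*g^3"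
    by (simp add: algebra_simps power2_eq_square power3_eq_cube)
  also have "\<dots> = (g-X)^3 - 2*g*(g-X)^2 + g^2*(g-X) + (L-M)*X*g^2*(g-X) - L*X*g^3"
    by (simp only: U)
  also have "\<dots> = - X * (M*g^3 + (L-M)*X*g^2 - X*g + X^2)"
    by (simp add: algebra_simps power2_eq_square power3_eq_cube)
  finally have "X * (M*g^3 + (L-M)*X*g^2 - X*g + X^2) = 0" using t1 by simp
  then show "M*g^3 + (L-M)*X*g^2 - X*g + X^2 = 0" using X by simp
qed

theorem theorem34:
  fixes l m :: nat
  assumes "l \<ge> 1" and "m \<ge> 1"
  shows "(\<forall>i. 1 \<le> i \<and> i \<le> l \<longrightarrow>
           (let F = F_A (l + m) (A_lm l m) i in
              fps_const (int l ^ 2) * F ^ 3 - fps_const (2 * int l) * F ^ 2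
              + (fps_const (int l - int m) * fps_X + 1) * F - fps_X = 0)) \<and>
         (\<forall>i. l + 1 \<le> i \<and> i \<le> l + m \<longrightarrow>
           (let F = F_A (l + m) (A_lm l m) i in
              fps_const (int m) * F ^ 3 + fps_const (int l - int m) * fps_X * F ^ 2
              - fps_X * F + fps_X ^ 2 = 0))"
  proof -
  let ?N = "l + m" and ?a = "A_lm l m"
  let ?F = "F_A ?N ?a"
  define SL where "SL = (\<Sum>j\<in>{1..l}. ?F j)"
  define SM where "SM = (\<Sum>j\<in>{l+1..l+m}. ?F j)"
  define f where "f = ?F 1"
  define g where "g = ?F (l+1)"
  have F0: "fps_nth (?F j) 0 = 0" for j by (simp add: F_A_nth col_0)
  have SL0: "fps_nth SL 0 = 0" by (simp add: SL_def fps_sum_nth F0)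
  have SM0: "fps_nth SM 0 = 0" by (simp add: SM_def fps_sum_nth F0)
  have JL: "J ?N ?a i = {1..l+m}" if "i \<le> l" for i
    using that by (auto simp: J_def A_lm_def)
  have JM: "J ?N ?a i = {1..l}" if "l < i" for i
    using that by (auto simp: J_def A_lm_def)
  have split: "{1..l+m} = {1..l} \<union> {l+1..l+m}" by auto
  have eqL: "?F i = fps_X + (SL + SM) * ?F i" if "1 \<le> i" "i \<le> l" for i
  proof -
    have "(\<Sum>j\<in>J ?N ?a i. ?F j) = SL + SM"
      unfolding JL[OF that(2)] split SL_def SM_def
      by (rule sum.union_disjoint) auto
    then show ?thesis using F_eq[of i ?N ?a] that by simp
  qed
  have eqM: "?F i = fps_X + SL * ?F i" if "l + 1 \<le> i" "i \<le> l + m" for i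
  proof -
    have "(\<Sum>j\<in>J ?N ?a i. ?F j) = SL"
    proof -
      have "l < i" using that by simp
      then have "J ?N ?a i = {1..l}" by (rule JM)
      then show ?thesis unfolding SL_def by (simp only:)
    qed
    then show ?thesis using F_eq[of i ?N ?a] that by simp
  qed
  have allL: "?F i = f" if "1 \<le> i" "i \<le> l" for i
  proof -
    have a1: "?F i = fps_X + (SL + SM) * ?F i" using that by (rule eqL)
    have a2: "?F 1 = fps_X + (SL + SM) * ?F 1" using assms by (intro eqL) auto
    have q: "fps_nth (SL + SM) 0 = 0" by (simp add: SL0 SM0)
    show ?thesis unfolding f_def by (rule unique_sol[OF q a1 a2])
  qed
  have allM: "?F i = g" if "l + 1 \<le> i" "i \<le> l + m" for i
  proof -
    have a1: "?F i = fps_X + SL * ?F i" using that by (rule eqM)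
    have a2: "?F (l+1) = fps_X + SL * ?F (l+1)" using assms by (intro eqM) auto
    show ?thesis unfolding g_def by (rule unique_sol[OF SL0 a1 a2])
  qed
  have SLf: "SL = of_nat l * f"
  proof -
    have "SL = (\<Sum>j\<in>{1..l}. f)" unfolding SL_def by (rule sum.cong) (auto intro: allL)
    then show ?thesis by simp
  qed
  have SMg: "SM = of_nat m * g"
  proof -
    have "SM = (\<Sum>j\<in>{l+1..l+m}. g)" unfolding SM_def by (rule sum.cong) (auto intro: allM)
    then show ?thesis by simp
  qed
  have e1: "f = fps_X + (of_nat l * f + of_nat m * g) * f"
  proof -
    have "f = fps_X + (SL + SM) * f" unfolding f_def using assms by (intro eqL) auto
    then show ?thesis unfolding SLf SMg .
  qed
  have e2: "g = fps_X + of_nat l * f * g"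
  proof -
    have "g = fps_X + SL * g" unfolding g_def using assms by (intro eqM) auto
    then show ?thesis unfolding SLf .
  qed
  have X: "(fps_X :: int fps) \<noteq> 0" by simp
  note A = alg[OF X e1 e2]
  have c4: "fps_const (int m) = (of_nat m :: int fps)"
    by (metis fps_of_nat of_int_of_nat_eq)
  have c4': "fps_const (int l) = (of_nat l :: int fps)"
    by (metis fps_of_nat of_int_of_nat_eq)
  have c1: "fps_const (int l ^ 2) = (of_nat l :: int fps)^2"
    by (metis c4' fps_const_power)
  have c2: "fps_const (2 * int l) = 2 * (of_nat l :: int fps)"
    by (simp add: c4' fps_const_mult[symmetric] numeral_fps_const)
  have c3: "fps_const (int l - int m) = (of_nat l - of_nat m :: int fps)"
    by (metis c4 c4' fps_const_sub)
  show ?thesis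
  proof (intro conjI allI impI)
    fix i assume "1 \<le> i \<and> i \<le> l"
    then have "?F i = f" using allL by blast
    then show "let F = ?F i in
              fps_const (int l ^ 2) * F ^ 3 - fps_const (2 * int l) * F ^ 2
              + (fps_const (int l - int m) * fps_X + 1) * F - fps_X = 0"
      unfolding Let_def c1 c2 c3 using A(1) by (simp only:)
  next
    fix i assume "l + 1 \<le> i \<and> i \<le> l + m"
    then have "?F i = g" using allM by blast
    then show "let F = ?F i in
              fps_const (int m) * F ^ 3 + fps_const (int l - int m) * fps_X * F ^ 2
              - fps_X * F + fps_X ^ 2 = 0"
      unfolding Let_def c3 c4 using A(2) by (simp only:)
  qed
qed

end
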